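(* Let $\mathcal D=(X,\mathcal A,\mu,\mu^{\otimes2},R,I,\Pi_R,G,E_0,\eta)$ be a pre-structural datum with $\eta\in[0,1)$ and $\mu(X)<\infty$, such that $\{r\}\in\mathcal A$ and $F_r:=\Pi_R^{-1}(\{r\})\in\mathcal A$ for every $r\in R$, and such that either (R-fin) $R$ is finite, or (R-ctbl) $R$ is countable, $\mathcal A$ is a $\sigma$-algebra and $\mu$ is $\sigma$-additive. Let $G|_R:=G\cap(R\times R)$ and let $\mathcal D|_R$ be the restricted datum $(R,\ \mathcal A\cap\mathcal P(R),\ \mu|_R,\ \mu^{\otimes2}|_{R\times R},\ R,\ \varnothing,\ \mathrm{id}_R,\ G|_R,\ \mu(R),\ \eta)$. Then: (i) If $\mathcal D$ satisfies Axiom I and Axiom III(b), then $\mu(X\setminus R)=0$ and, for every $B\in\mathcal A$, with $B_R:=B\cap R$, \[\mu^{\otimes2}((B\times X)\cap G)=\mu^{\otimes2}((B_R\times R)\cap G|_R).\] (ii) If $\mathcal D$ satisfies Axiom I and Axiom III(b), then the coupling law (Axiom III(c)) holds for $\mathcal D$ if and only if it holds for $\mathcal D|_R$, i.e. if and only if $\mu^{\otimes2}((B\times R)\cap G|_R)=\mu(B)+\eta\,\mu^{\otimes2}((B\times R)\cap G|_R)$ for all $B\in\mathcal A$ with $B\subseteq R$. (iii) If $\mathcal D$ satisfies Axioms I, II, III(a), III(b) and $X=R\sqcup I$, then $\mathcal D$ is an admissible structural model if and only if $\mathcal D|_R$ is an admissible structural model.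
   Context: For a nonempty set $X$, an algebra $\mathcal A\subseteq\mathcal P(X)$ contains $\varnothing,X$ and is closed under finite unions and complements. A finitely additive measure $\mu:\mathcal A\to[0,\infty)$ satisfies $\mu(\varnothing)=0$ and additivity on disjoint pairs. $\mathcal A\otimes\mathcal A$ denotes the algebra generated by rectangles $B_1\times B_2$, $B_i\in\mathcal A$. For relations $H,K\subseteq X\times X$, $H\circ K=\{(x,z):\exists y\,(x,y)\in H,(y,z)\in K\}$. A pre-structural datum is a tuple $(X,\mathcal A,\mu,\mu^{\otimes2},R,I,\Pi_R,G,E_0,\eta)$ where: $X$ nonempty; $\mathcal A$ an algebra on $X$; $\mu$ a finitely additive measure on $\mathcal A$; $\mu^{\otimes2}:\mathcal A\otimes\mathcal A\to[0,\infty)$ finitely additive with $\mu^{\otimes2}(B_1\times B_2)=\mu(B_1)\mu(B_2)$; $R,I\in\mathcal A$ disjoint; $\Pi_R:X\to R$ a map; $G\in\mathcal A\otimes\mathcal A$; $E_0\in(0,\infty)$; $\eta\in[0,1]$. Axiom I: $\Pi_R\circ\Pi_R=\Pi_R$, $\Pi_R(r)=r$ for $r\in R$, and $\Pi_R^{-1}(B)\in\mathcal A$ for every $B\in\mathcal A$ with $B\subseteq R$. Axiom II: $G$ is reflexive, symmetric, and $G\circ G=G$. Axiom III: (a) $\mu(R)+\mu(I)=E_0>0$; (b) $\mu(\Pi_R^{-1}(B))=\mu(B)$ for all $B\in\mathcal A$, $B\subseteq R$; (c) coupling law: for all $B\in\mathcal A$, $\mu^{\otimes2}((B\times X)\cap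 G)=\mu(B)+\eta\,\mu^{\otimes2}((\Pi_R^{-1}(B)\times X)\cap G)$. An admissible structural model is a pre-structural datum satisfying Axioms I, II, III. *)

theory Defs
  imports "HOL-Analysis.Analysis"
begin

definition prod_alg :: "'a set \<Rightarrow> 'a set set \<Rightarrow> ('a \<times> 'a) set set" where
  "prod_alg X A = \<Inter>{M. algebra (X \<times> X) M \<and>
                        {B1 \<times> B2 | B1 B2. B1 \<in> A \<and> B2 \<in> A} \<subseteq> M}"

definition fin_add_measure :: "'b set set \<Rightarrow> ('b set \<Rightarrow> real) \<Rightarrow> bool" where
  "fin_add_measure A mu \<longleftrightarrow> mu {} = 0 \<and> (\<forall>B\<in>A. 0 \<le> mu B) \<and>
     (\<forall>B\<in>A. \<forall>C\<in>A. B \<inter> C = {} \<longrightarrow> mu (B \<union> C) = mu B + mu C)"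

definition sigma_additive :: "'b set set \<Rightarrow> ('b set \<Rightarrow> real) \<Rightarrow> bool" where
  "sigma_additive A mu \<longleftrightarrow> (\<forall>F :: nat \<Rightarrow> 'b set. range F \<subseteq> A \<longrightarrow> disjoint_family F \<longrightarrow>
      (\<Union>n. F n) \<in> A \<longrightarrow> (\<lambda>n. mu (F n)) sums mu (\<Union>n. F n))"

definition preim :: "'a set \<Rightarrow> ('a \<Rightarrow> 'a) \<Rightarrow> 'a set \<Rightarrow> 'a set" where
  "preim X PiR B = {x \<in> X. PiR x \<in> B}"

definition pre_structural ::
  "'a set \<Rightarrow> 'a set set \<Rightarrow> ('a set \<Rightarrow> real) \<Rightarrow> (('a \<times> 'a) set \<Rightarrow> real) \<Rightarrow>
   'a set \<Rightarrow> 'a set \<Rightarrow> ('a \<Rightarrow> 'a) \<Rightarrow> ('a \<times> 'a) set \<Rightarrow> real \<Rightarrow> real \<Rightarrow> bool" where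
  "pre_structural X A mu mu2 R I PiR G E0 eta \<longleftrightarrow>
     X \<noteq> {} \<and> algebra X A \<and> fin_add_measure A mu \<and>
     fin_add_measure (prod_alg X A) mu2 \<and>
     (\<forall>B1\<in>A. \<forall>B2\<in>A. mu2 (B1 \<times> B2) = mu B1 * mu B2) \<and>
     R \<in> A \<and> I \<in> A \<and> R \<inter> I = {} \<and>
     (\<forall>x\<in>X. PiR x \<in> R) \<and> G \<in> prod_alg X A \<and> 0 < E0 \<and> 0 \<le> eta \<and> eta \<le> 1"

definition axiom_I :: "'a set \<Rightarrow> 'a set set \<Rightarrow> 'a set \<Rightarrow> ('a \<Rightarrow> 'a) \<Rightarrow> bool" where
  "axiom_I X A R PiR \<longleftrightarrow> (\<forall>x\<in>X. PiR (PiR x) = PiR x) \<and> (\<forall>r\<in>R. PiR r = r) \<and>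
     (\<forall>B\<in>A. B \<subseteq> R \<longrightarrow> preim X PiR B \<in> A)"

definition axiom_II :: "'a set \<Rightarrow> ('a \<times> 'a) set \<Rightarrow> bool" where
  "axiom_II X G \<longleftrightarrow> (\<forall>x\<in>X. (x, x) \<in> G) \<and> sym G \<and> G O G = G"

definition axiom_IIIa :: "('a set \<Rightarrow> real) \<Rightarrow> 'a set \<Rightarrow> 'a set \<Rightarrow> real \<Rightarrow> bool" where
  "axiom_IIIa mu R I E0 \<longleftrightarrow> mu R + mu I = E0 \<and> 0 < E0"

definition axiom_IIIb ::
  "'a set \<Rightarrow> 'a set set \<Rightarrow> ('a set \<Rightarrow> real) \<Rightarrow> 'a set \<Rightarrow> ('a \<Rightarrow> 'a) \<Rightarrow> bool" where
  "axiom_IIIb X A mu R PiR \<longleftrightarrow> (\<forall>B\<in>A. B \<subseteq> R \<longrightarrow> mu (preim X PiR B) = mu B)"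

definition axiom_IIIc ::
  "'a set \<Rightarrow> 'a set set \<Rightarrow> ('a set \<Rightarrow> real) \<Rightarrow> (('a \<times> 'a) set \<Rightarrow> real) \<Rightarrow>
   ('a \<Rightarrow> 'a) \<Rightarrow> ('a \<times> 'a) set \<Rightarrow> real \<Rightarrow> bool" where
  "axiom_IIIc X A mu mu2 PiR G eta \<longleftrightarrow>
     (\<forall>B\<in>A. mu2 ((B \<times> X) \<inter> G) = mu B + eta * mu2 ((preim X PiR B \<times> X) \<inter> G))"

definition admissible ::
  "'a set \<Rightarrow> 'a set set \<Rightarrow> ('a set \<Rightarrow> real) \<Rightarrow> (('a \<times> 'a) set \<Rightarrow> real) \<Rightarrow>
   'a set \<Rightarrow> 'a set \<Rightarrow> ('a \<Rightarrow> 'a) \<Rightarrow> ('a \<times> 'a) set \<Rightarrow> real \<Rightarrow> real \<Rightarrow> bool" where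
  "admissible X A mu mu2 R I PiR G E0 eta \<longleftrightarrow>
     pre_structural X A mu mu2 R I PiR G E0 eta \<and> axiom_I X A R PiR \<and> axiom_II X G \<and>
     axiom_IIIa mu R I E0 \<and> axiom_IIIb X A mu R PiR \<and> axiom_IIIc X A mu mu2 PiR G eta"

end

theory Submission
  imports Defs
begin

lemma alg_sub: "algebra \<Omega> M \<Longrightarrow> S \<in> M \<Longrightarrow> S \<subseteq> \<Omega>"
  by (auto simp: algebra_iff_Un)

lemma alg_diff: "algebra \<Omega> M \<Longrightarrow> S \<in> M \<Longrightarrow> T \<in> M \<Longrightarrow> S - T \<in> M"
proof -
  assume "algebra \<Omega> M" then interpret algebra \<Omega> M .
  show "S \<in> M \<Longrightarrow> T \<in> M \<Longrightarrow> S - T \<in> M" by blast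
qed

lemma alg_int: "algebra \<Omega> M \<Longrightarrow> S \<in> M \<Longrightarrow> T \<in> M \<Longrightarrow> S \<inter> T \<in> M"
proof -
  assume "algebra \<Omega> M" then interpret algebra \<Omega> M .
  show "S \<in> M \<Longrightarrow> T \<in> M \<Longrightarrow> S \<inter> T \<in> M" by blast
qed

lemma alg_un: "algebra \<Omega> M \<Longrightarrow> S \<in> M \<Longrightarrow> T \<in> M \<Longrightarrow> S \<union> T \<in> M"
  by (simp add: algebra_iff_Un)

lemma alg_top: "algebra \<Omega> M \<Longrightarrow> \<Omega> \<in> M"
proof -
  assume "algebra \<Omega> M" then interpret algebra \<Omega> M .
  show ?thesis by blast
qed

lemma pa_algebra:
  assumes "algebra X A" shows "algebra (X \<times> X) (prod_alg X A)"
proof -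
  let ?F = "{M. algebra (X \<times> X) M \<and> {B1 \<times> B2 | B1 B2. B1 \<in> A \<and> B2 \<in> A} \<subseteq> M}"
  have "Pow (X \<times> X) \<in> ?F"
    using alg_sub[OF assms] by (auto simp: algebra_iff_Un)
  have all: "\<And>M. M \<in> ?F \<Longrightarrow> M \<subseteq> Pow (X \<times> X) \<and> {} \<in> M \<and> (\<forall>a\<in>M. X \<times> X - a \<in> M) \<and> (\<forall>a\<in>M. \<forall>b\<in>M. a \<union> b \<in> M)"
    by (simp add: algebra_iff_Un)
  have "\<Inter> ?F \<subseteq> Pow (X \<times> X)" using \<open>Pow (X \<times> X) \<in> ?F\<close> by blast
  moreover have "{} \<in> \<Inter> ?F" using all by (intro InterI) blast
  moreover have "\<forall>a\<in>\<Inter> ?F. X \<times> X - a \<in> \<Inter> ?F"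
  proof (intro ballI InterI)
    fix a M assume a: "a \<in> \<Inter> ?F" and M: "M \<in> ?F"
    then have "a \<in> M" by (rule InterD)
    then show "X \<times> X - a \<in> M" using all[OF M] by blast
  qed
  moreover have "\<forall>a\<in>\<Inter> ?F. \<forall>b\<in>\<Inter> ?F. a \<union> b \<in> \<Inter> ?F"
  proof (intro ballI InterI)
    fix a b M assume a: "a \<in> \<Inter> ?F" and b: "b \<in> \<Inter> ?F" and M: "M \<in> ?F"
    then have "a \<in> M" "b \<in> M" by (auto dest: InterD)
    then show "a \<union> b \<in> M" using all[OF M] by blast
  qed
  ultimately show ?thesis unfolding prod_alg_def algebra_iff_Un by (intro conjI)
qed

lemma pa_rect: "B1 \<in> A \<Longrightarrow> B2 \<in> A \<Longrightarrow> B1 \<times> B2 \<in> prod_alg X A"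
  unfolding prod_alg_def by blast

lemma pa_least: "algebra (X \<times> X) M \<Longrightarrow> (\<forall>B1\<in>A. \<forall>B2\<in>A. B1 \<times> B2 \<in> M) \<Longrightarrow> prod_alg X A \<subseteq> M"
  unfolding prod_alg_def by blast

lemma fa_diff:
  assumes "algebra \<Omega> M" "fin_add_measure M mu" "S \<in> M" "T \<in> M" "T \<subseteq> S"
  shows "mu S = mu T + mu (S - T)"
proof -
  have "S - T \<in> M" using assms by (simp add: alg_diff)
  moreover have "T \<union> (S - T) = S" using assms(5) by blast
  ultimately show ?thesis using assms unfolding fin_add_measure_def
    by (metis Diff_disjoint)
qed

lemma fa_mono:
  assumes "algebra \<Omega> M" "fin_add_measure M mu" "S \<in> M" "T \<in> M" "T \<subseteq> S"
  shows "mu T \<le> mu S"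
proof -
  have "S - T \<in> M" using assms by (simp add: alg_diff)
  then show ?thesis using fa_diff[OF assms] assms(2) unfolding fin_add_measure_def by force
qed

lemma fa_subadd:
  assumes "algebra \<Omega> M" "fin_add_measure M mu" "S \<in> M" "T \<in> M"
  shows "mu (S \<union> T) \<le> mu S + mu T"
proof -
  have d: "T - S \<in> M" using assms by (simp add: alg_diff)
  have "S \<union> T = S \<union> (T - S)" by blast
  hence "mu (S \<union> T) = mu S + mu (T - S)" using assms d unfolding fin_add_measure_def
    by (metis Diff_disjoint Int_commute)
  moreover have "mu (T - S) \<le> mu T" using fa_mono[OF assms(1,2,4) d] by blast
  ultimately show ?thesis by linarith
qed

lemma preim_id: "B \<subseteq> R \<Longrightarrow> preim R (\<lambda>x. x) B = B"
  by (auto simp: preim_def)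


theorem theorem8p18:
  fixes X :: "'a set" and A :: "'a set set" and mu :: "'a set \<Rightarrow> real"
    and mu2 :: "('a \<times> 'a) set \<Rightarrow> real" and R I :: "'a set" and PiR :: "'a \<Rightarrow> 'a"
    and G :: "('a \<times> 'a) set" and E0 eta :: real
  assumes pre: "pre_structural X A mu mu2 R I PiR G E0 eta"
    and eta_lt: "eta < 1"
    and sing: "\<forall>r\<in>R. {r} \<in> A"
    and fibre: "\<forall>r\<in>R. preim X PiR {r} \<in> A"
    and Rcases: "finite R \<or> (countable R \<and> sigma_algebra X A \<and> sigma_additive A mu)"
  shows
    "(axiom_I X A R PiR \<and> axiom_IIIb X A mu R PiR \<longrightarrow>
        mu (X - R) = 0 \<and>
        (\<forall>B\<in>A. mu2 ((B \<times> X) \<inter> G) = mu2 (((B \<inter> R) \<times> R) \<inter> (G \<inter> (R \<times> R)))))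
   \<and> (axiom_I X A R PiR \<and> axiom_IIIb X A mu R PiR \<longrightarrow>
        (axiom_IIIc X A mu mu2 PiR G eta \<longleftrightarrow>
           axiom_IIIc R {B \<in> A. B \<subseteq> R} mu mu2 (\<lambda>x. x) (G \<inter> (R \<times> R)) eta) \<and>
        (axiom_IIIc R {B \<in> A. B \<subseteq> R} mu mu2 (\<lambda>x. x) (G \<inter> (R \<times> R)) eta \<longleftrightarrow>
           (\<forall>B\<in>A. B \<subseteq> R \<longrightarrow>
              mu2 ((B \<times> R) \<inter> (G \<inter> (R \<times> R))) =
                mu B + eta * mu2 ((B \<times> R) \<inter> (G \<inter> (R \<times> R))))))
   \<and> (axiom_I X A R PiR \<and> axiom_II X G \<and> axiom_IIIa mu R I E0 \<and> axiom_IIIb X A mu R PiR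
        \<and> X = R \<union> I \<longrightarrow>
        (admissible X A mu mu2 R I PiR G E0 eta \<longleftrightarrow>
           admissible R {B \<in> A. B \<subseteq> R} mu mu2 R {} (\<lambda>x. x) (G \<inter> (R \<times> R)) (mu R) eta))"
proof -
  have alg: "algebra X A" and fa: "fin_add_measure A mu" and fa2: "fin_add_measure (prod_alg X A) mu2"
    and rect: "\<forall>B1\<in>A. \<forall>B2\<in>A. mu2 (B1 \<times> B2) = mu B1 * mu B2"
    and RA: "R \<in> A" and IA: "I \<in> A" and RI: "R \<inter> I = {}" and PiRR: "\<forall>x\<in>X. PiR x \<in> R"
    and GA: "G \<in> prod_alg X A" and eta0: "0 \<le> eta" and eta1: "eta \<le> 1"
    using pre unfolding pre_structural_def by auto
  have PA: "algebra (X \<times> X) (prod_alg X A)" by (rule pa_algebra[OF alg])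
  have GX: "G \<subseteq> X \<times> X" using alg_sub[OF PA GA] .
  have RX: "R \<subseteq> X" using alg_sub[OF alg RA] .
  have XA: "X \<in> A" using alg_top[OF alg] .
  have fanon: "\<And>B. B \<in> A \<Longrightarrow> 0 \<le> mu B" using fa unfolding fin_add_measure_def by blast
  have fa2non: "\<And>B. B \<in> prod_alg X A \<Longrightarrow> 0 \<le> mu2 B" using fa2 unfolding fin_add_measure_def by blast
  define AR where "AR = {B \<in> A. B \<subseteq> R}"
  define G' where "G' = G \<inter> (R \<times> R)"
  have I1: "mu (X - R) = 0" and I2: "\<And>B. B \<in> A \<Longrightarrow> mu2 ((B \<times> X) \<inter> G) = mu2 (((B \<inter> R) \<times> R) \<inter> G')"
    and I3: "\<And>B. B \<in> A \<Longrightarrow> mu B = mu (B \<inter> R)"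
    and I4: "\<And>B. B \<in> A \<Longrightarrow> preim X PiR B \<in> A \<and> preim X PiR B \<inter> R = B \<inter> R"
    if aI: "axiom_I X A R PiR" and aIIIb: "axiom_IIIb X A mu R PiR"
  proof -
    have "preim X PiR R = X" using PiRR by (auto simp: preim_def)
    hence muX: "mu X = mu R" using aIIIb RA unfolding axiom_IIIb_def by force
    have XRA: "X - R \<in> A" using alg_diff[OF alg XA RA] .
    show XR0: "mu (X - R) = 0" using fa_diff[OF alg fa XA RA RX] muX by linarith
    have N1: "mu2 ((X - R) \<times> X) = 0" using rect XRA XA XR0 by simp
    have N2: "mu2 (X \<times> (X - R)) = 0" using rect XRA XA XR0 by simp
    have N1A: "(X - R) \<times> X \<in> prod_alg X A" using pa_rect XRA XA by blast
    have N2A: "X \<times> (X - R) \<in> prod_alg X A" using pa_rect XRA XA by blast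
    have NA: "(X - R) \<times> X \<union> X \<times> (X - R) \<in> prod_alg X A" using alg_un[OF PA N1A N2A] .
    have N0: "mu2 ((X - R) \<times> X \<union> X \<times> (X - R)) \<le> 0"
      using fa_subadd[OF PA fa2 N1A N2A] N1 N2 by linarith
    show "mu2 ((B \<times> X) \<inter> G) = mu2 (((B \<inter> R) \<times> R) \<inter> G')" if BA: "B \<in> A" for B
    proof -
      have BRA: "B \<inter> R \<in> A" using alg_int[OF alg BA RA] .
      have SA: "(B \<times> X) \<inter> G \<in> prod_alg X A" using alg_int[OF PA pa_rect[OF BA XA] GA] .
      have "((B \<inter> R) \<times> R) \<inter> G' = ((B \<inter> R) \<times> R) \<inter> G" unfolding G'_def by blast
      moreover have TA: "((B \<inter> R) \<times> R) \<inter> G \<in> prod_alg X A" using alg_int[OF PA pa_rect[OF BRA RA] GA] .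
      moreover have sub: "((B \<inter> R) \<times> R) \<inter> G \<subseteq> (B \<times> X) \<inter> G" using RX by blast
      moreover have DA: "(B \<times> X) \<inter> G - ((B \<inter> R) \<times> R) \<inter> G \<in> prod_alg X A" using alg_diff[OF PA SA TA] .
      moreover have "(B \<times> X) \<inter> G - ((B \<inter> R) \<times> R) \<inter> G \<subseteq> (X - R) \<times> X \<union> X \<times> (X - R)"
        using GX by blast
      ultimately have "mu2 ((B \<times> X) \<inter> G - ((B \<inter> R) \<times> R) \<inter> G) = 0"
        using fa_mono[OF PA fa2 NA DA] N0 fa2non[OF DA] by linarith
      then show ?thesis using fa_diff[OF PA fa2 SA TA sub] \<open>((B \<inter> R) \<times> R) \<inter> G' = ((B \<inter> R) \<times> R) \<inter> G\<close> by simp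
    qed
    show "mu B = mu (B \<inter> R)" if BA: "B \<in> A" for B
    proof -
      have BRA: "B \<inter> R \<in> A" using alg_int[OF alg BA RA] .
      have DA: "B - B \<inter> R \<in> A" using alg_diff[OF alg BA BRA] .
      have "B - B \<inter> R \<subseteq> X - R" using alg_sub[OF alg BA] by blast
      hence "mu (B - B \<inter> R) = 0" using fa_mono[OF alg fa XRA DA] XR0 fanon[OF DA] by linarith
      thus ?thesis using fa_diff[OF alg fa BA BRA] by simp
    qed
    show "preim X PiR B \<in> A \<and> preim X PiR B \<inter> R = B \<inter> R" if BA: "B \<in> A" for B
    proof -
      have BRA: "B \<inter> R \<in> A" using alg_int[OF alg BA RA] .
      have "preim X PiR B = preim X PiR (B \<inter> R)" using PiRR by (auto simp: preim_def)
      moreover have "preim X PiR (B \<inter> R) \<in> A" using aI BRA unfolding axiom_I_def by blast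
      moreover have "preim X PiR B \<inter> R = B \<inter> R" using aI RX unfolding axiom_I_def preim_def by auto
      ultimately show ?thesis by simp
    qed
  qed
  have RC: "axiom_IIIc R AR mu mu2 (\<lambda>x. x) G' eta \<longleftrightarrow>
           (\<forall>B\<in>A. B \<subseteq> R \<longrightarrow> mu2 ((B \<times> R) \<inter> G') = mu B + eta * mu2 ((B \<times> R) \<inter> G'))"
    unfolding axiom_IIIc_def AR_def by (auto simp: preim_id)
  have II: "axiom_IIIc X A mu mu2 PiR G eta \<longleftrightarrow> axiom_IIIc R AR mu mu2 (\<lambda>x. x) G' eta"
    if aI: "axiom_I X A R PiR" and aIIIb: "axiom_IIIb X A mu R PiR"
  proof -
    have "axiom_IIIc X A mu mu2 PiR G eta \<longleftrightarrow>
          (\<forall>B\<in>A. mu2 (((B \<inter> R) \<times> R) \<inter> G') = mu (B \<inter> R) + eta * mu2 (((B \<inter> R) \<times> R) \<inter> G'))"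
      unfolding axiom_IIIc_def
    proof (intro ball_cong refl)
      fix B assume BA: "B \<in> A"
      have P: "preim X PiR B \<in> A" "preim X PiR B \<inter> R = B \<inter> R" using I4[OF aI aIIIb BA] by auto
      show "(mu2 ((B \<times> X) \<inter> G) = mu B + eta * mu2 ((preim X PiR B \<times> X) \<inter> G)) =
        (mu2 (((B \<inter> R) \<times> R) \<inter> G') = mu (B \<inter> R) + eta * mu2 (((B \<inter> R) \<times> R) \<inter> G'))"
        using I2[OF aI aIIIb BA] I2[OF aI aIIIb P(1)] P(2) I3[OF aI aIIIb BA] by simp
    qed
    also have "\<dots> \<longleftrightarrow> (\<forall>B\<in>A. B \<subseteq> R \<longrightarrow> mu2 ((B \<times> R) \<inter> G') = mu B + eta * mu2 ((B \<times> R) \<inter> G'))"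
    proof
      assume h: "\<forall>B\<in>A. mu2 (((B \<inter> R) \<times> R) \<inter> G') = mu (B \<inter> R) + eta * mu2 (((B \<inter> R) \<times> R) \<inter> G')"
      show "\<forall>B\<in>A. B \<subseteq> R \<longrightarrow> mu2 ((B \<times> R) \<inter> G') = mu B + eta * mu2 ((B \<times> R) \<inter> G')"
      proof (intro ballI impI)
        fix B assume "B \<in> A" "B \<subseteq> R"
        then show "mu2 ((B \<times> R) \<inter> G') = mu B + eta * mu2 ((B \<times> R) \<inter> G')"
          using h[rule_format, of B] by (simp add: Int_absorb2)
      qed
    next
      assume h: "\<forall>B\<in>A. B \<subseteq> R \<longrightarrow> mu2 ((B \<times> R) \<inter> G') = mu B + eta * mu2 ((B \<times> R) \<inter> G')"
      show "\<forall>B\<in>A. mu2 (((B \<inter> R) \<times> R) \<inter> G') = mu (B \<inter> R) + eta * mu2 (((B \<inter> R) \<times> R) \<inter> G')"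
        using h alg_int[OF alg _ RA] by blast
    qed
    finally show ?thesis using RC by simp
  qed
  have III: "admissible X A mu mu2 R I PiR G E0 eta \<longleftrightarrow> admissible R AR mu mu2 R {} (\<lambda>x. x) G' (mu R) eta"
    if aI: "axiom_I X A R PiR" and aII: "axiom_II X G" and aIIIa: "axiom_IIIa mu R I E0"
      and aIIIb: "axiom_IIIb X A mu R PiR"
  proof -
    have IX: "I \<subseteq> X - R" using alg_sub[OF alg IA] RI by blast
    have "mu I \<le> mu (X - R)" using fa_mono[OF alg fa alg_diff[OF alg XA RA] IA IX] .
    hence muI: "mu I = 0" using I1[OF aI aIIIb] fanon[OF IA] by linarith
    hence muR: "0 < mu R" using aIIIa unfolding axiom_IIIa_def by linarith
    have Rne: "R \<noteq> {}" using muR fa unfolding fin_add_measure_def by auto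
    have algR: "algebra R AR"
      unfolding algebra_iff_Un AR_def
    proof (intro conjI ballI)
      show "{} \<in> {B \<in> A. B \<subseteq> R}" using alg_diff[OF alg RA RA] by simp
    next
      fix a assume "a \<in> {B \<in> A. B \<subseteq> R}"
      then show "R - a \<in> {B \<in> A. B \<subseteq> R}" using alg_diff[OF alg RA] by blast
    next
      fix a b assume "a \<in> {B \<in> A. B \<subseteq> R}" "b \<in> {B \<in> A. B \<subseteq> R}"
      then show "a \<union> b \<in> {B \<in> A. B \<subseteq> R}" using alg_un[OF alg] by blast
    qed blast
    have faR: "fin_add_measure AR mu" using fa unfolding fin_add_measure_def AR_def by auto
    define M where "M = {S \<in> prod_alg X A. S \<subseteq> R \<times> R}"
    have RRA: "R \<times> R \<in> prod_alg X A" using pa_rect RA by blast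
    have algM: "algebra (R \<times> R) M"
      unfolding algebra_iff_Un M_def
    proof (intro conjI ballI)
      show "{} \<in> {S \<in> prod_alg X A. S \<subseteq> R \<times> R}" using PA by (auto simp: algebra_iff_Un)
    next
      fix a assume "a \<in> {S \<in> prod_alg X A. S \<subseteq> R \<times> R}"
      then show "R \<times> R - a \<in> {S \<in> prod_alg X A. S \<subseteq> R \<times> R}" using alg_diff[OF PA RRA] by blast
    next
      fix a b assume "a \<in> {S \<in> prod_alg X A. S \<subseteq> R \<times> R}" "b \<in> {S \<in> prod_alg X A. S \<subseteq> R \<times> R}"
      then show "a \<union> b \<in> {S \<in> prod_alg X A. S \<subseteq> R \<times> R}" using alg_un[OF PA] by blast
    qed blast
    have PRsub: "prod_alg R AR \<subseteq> prod_alg X A"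
    proof -
      have "prod_alg R AR \<subseteq> M"
        by (rule pa_least[OF algM]) (auto simp: M_def AR_def intro: pa_rect)
      thus ?thesis unfolding M_def by blast
    qed
    have fa2R: "fin_add_measure (prod_alg R AR) mu2"
      using fa2 PRsub unfolding fin_add_measure_def by blast
    define M2 where "M2 = {S. S \<subseteq> X \<times> X \<and> S \<inter> (R \<times> R) \<in> prod_alg R AR}"
    have PAR: "algebra (R \<times> R) (prod_alg R AR)" by (rule pa_algebra[OF algR])
    have RRAR: "R \<times> R \<in> prod_alg R AR" using alg_top[OF PAR] .
    have algM2: "algebra (X \<times> X) M2"
      unfolding algebra_iff_Un M2_def
    proof (intro conjI ballI)
      show "{} \<in> {S. S \<subseteq> X \<times> X \<and> S \<inter> (R \<times> R) \<in> prod_alg R AR}" using PAR by (auto simp: algebra_iff_Un)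
    next
      fix a assume a: "a \<in> {S. S \<subseteq> X \<times> X \<and> S \<inter> (R \<times> R) \<in> prod_alg R AR}"
      have "(X \<times> X - a) \<inter> (R \<times> R) = R \<times> R - a \<inter> (R \<times> R)" using RX by blast
      then show "X \<times> X - a \<in> {S. S \<subseteq> X \<times> X \<and> S \<inter> (R \<times> R) \<in> prod_alg R AR}"
        using alg_diff[OF PAR RRAR] a by auto
    next
      fix a b assume a: "a \<in> {S. S \<subseteq> X \<times> X \<and> S \<inter> (R \<times> R) \<in> prod_alg R AR}"
        and b: "b \<in> {S. S \<subseteq> X \<times> X \<and> S \<inter> (R \<times> R) \<in> prod_alg R AR}"
      have "(a \<union> b) \<inter> (R \<times> R) = a \<inter> (R \<times> R) \<union> b \<inter> (R \<times> R)" by blast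
      then show "a \<union> b \<in> {S. S \<subseteq> X \<times> X \<and> S \<inter> (R \<times> R) \<in> prod_alg R AR}"
        using alg_un[OF PAR] a b by auto
    qed blast
    have "prod_alg X A \<subseteq> M2"
    proof (rule pa_least[OF algM2], intro ballI)
      fix B1 B2 assume b1: "B1 \<in> A" and b2: "B2 \<in> A"
      have e: "(B1 \<times> B2) \<inter> (R \<times> R) = (B1 \<inter> R) \<times> (B2 \<inter> R)" by blast
      have r1: "B1 \<inter> R \<in> AR" unfolding AR_def using alg_int[OF alg b1 RA] by blast
      have r2: "B2 \<inter> R \<in> AR" unfolding AR_def using alg_int[OF alg b2 RA] by blast
      have "(B1 \<inter> R) \<times> (B2 \<inter> R) \<in> prod_alg R AR" by (rule pa_rect[OF r1 r2])
      moreover have "B1 \<times> B2 \<subseteq> X \<times> X" using alg_sub[OF alg b1] alg_sub[OF alg b2] by blast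
      ultimately show "B1 \<times> B2 \<in> M2" unfolding M2_def using e by simp
    qed
    hence G'A: "G' \<in> prod_alg R AR" using GA unfolding M2_def G'_def by blast
    have preR: "pre_structural R AR mu mu2 R {} (\<lambda>x. x) G' (mu R) eta"
    proof -
      have "{} \<in> AR" using algR by (simp add: algebra_iff_Un)
      moreover have "R \<in> AR" using alg_top[OF algR] .
      moreover have "\<forall>B1\<in>AR. \<forall>B2\<in>AR. mu2 (B1 \<times> B2) = mu B1 * mu B2" using rect unfolding AR_def by blast
      ultimately show ?thesis unfolding pre_structural_def
        using Rne algR faR fa2R muR eta0 eta1 G'A by simp
    qed
    have aIR: "axiom_I R AR R (\<lambda>x. x)" unfolding axiom_I_def by (auto simp: AR_def preim_id)
    have aIIR: "axiom_II R G'"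
    proof -
      have "(\<forall>x\<in>R. (x, x) \<in> G')" using aII RX unfolding axiom_II_def G'_def by blast
      moreover have "sym G'" using aII unfolding axiom_II_def G'_def sym_def by blast
      moreover have "G' O G' = G'"
      proof
        show "G' O G' \<subseteq> G'" using aII unfolding axiom_II_def G'_def by blast
        show "G' \<subseteq> G' O G'"
        proof
          fix p assume p: "p \<in> G'"
          obtain x z where pxz: "p = (x, z)" by (cases p)
          have "x \<in> R" using p pxz unfolding G'_def by blast
          hence "(x, x) \<in> G'" using aII RX unfolding axiom_II_def G'_def by blast
          thus "p \<in> G' O G'" using p pxz by blast
        qed
      qed
      ultimately show ?thesis unfolding axiom_II_def by blast
    qed
    have aIIIaR: "axiom_IIIa mu R {} (mu R)" unfolding axiom_IIIa_def using muR fa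
      unfolding fin_add_measure_def by simp
    have aIIIbR: "axiom_IIIb R AR mu R (\<lambda>x. x)" unfolding axiom_IIIb_def using preim_id
      by (auto simp: AR_def preim_id)
    show ?thesis unfolding admissible_def using pre aI aII aIIIa aIIIb preR aIR aIIR aIIIaR aIIIbR
        II[OF aI aIIIb] by blast
  qed
  show ?thesis
    using I1 I2 II RC III unfolding AR_def G'_def by blast
qed

end
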